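(* For a complete residuated lattice $L=(L,* )$ the following are equivalent: (i) $L$ satisfies the law of double negation, i.e. $(a\to0)\to0=a$ for all $a\in L$; (ii) for every $L$-context $(X,Y,\phi)$ and all $X'\subseteq X$, $Y'\subseteq Y$: $(X',Y',(\neg\phi)_{X',Y'})$ is a reduct of $(X,Y,\neg\phi)$ in RST if and only if $(X',Y',\phi_{X',Y'})$ is a reduct of $(X,Y,\phi)$ in FCA; (iii) for every $L$-context $(X,Y,\phi)$ and all $X'\subseteq X$, $Y'\subseteq Y$: if $(X',Y',(\neg\phi)_{X',Y'})$ is a reduct of $(X,Y,\neg\phi)$ in RST, then $(X',Y',\phi_{X',Y'})$ is a reduct of $(X,Y,\phi)$ in FCA.
   Context: $L=(L,* )$ is a complete residuated lattice: a complete lattice with bottom $0$ and top $1$, with a commutative associative operation $*$ with unit $1$ satisfying $a*\bigvee_i b_i=\bigvee_i a*b_i$; $\to$ is its residuum ($a*b\le c\iff a\le b\to c$); $\neg a=a\to 0$. An $L$-context is $(X,Y,\phi)$ with $X,Y$ sets and $\phi\colon X\times Y\to L$; $(\neg\phi)(x,y)=\neg\phi(x,y)$. $L^X$ is the set of maps $X\to L$ with $L$-order $L^X(\mu,\mu')=\bigwedge_x(\mu(x)\to\mu'(x))$. For $\mu\in L^X$, $\lambda\in L^Y$: $(\phi^\uparrow\mu)(y)=\bigwedge_{x}(\mu(x)\to\phi(x,y))$, $(\phi^\downarrow\lambda)(x)=\bigwedge_{y}(\lambda(y)\to\phi(x,y))$, $(\phi^\exists\mu)(y)=\bigvee_x\mu(x)*\phi(x,y)$,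 $(\phi^\forall\lambda)(x)=\bigwedge_y(\phi(x,y)\to\lambda(y))$. $\mathcal{M}\phi=\{\mu\in L^X\mid\phi^\downarrow\phi^\uparrow\mu=\mu\}$, $\mathcal{K}\phi=\{\mu\in L^X\mid\phi^\forall\phi^\exists\mu=\mu\}$, both with the $L$-order inherited from $L^X$. For $X'\subseteq X$, $Y'\subseteq Y$: $\phi_{X',Y'}$ is the restriction of $\phi$ to $X'\times Y'$; $\mu_{X'}$ the restriction of $\mu\in L^X$; $\underline{\mu'}\in L^X$ the extension of $\mu'\in L^{X'}$ by $0$. An isomorphism of complete $L$-lattices is an $L$-isometric bijection ($P(p,p')=Q(fp,fp')$). Reduct in FCA: $(X',Y',\phi_{X',Y'})$ is a reduct of $(X,Y,\phi)$ in FCA if the map $E_1\colon\mathcal{M}\phi_{X',Y'}\to\mathcal{M}\phi$, $\mu'\mapsto\phi^\downarrow\phi^\uparrow\underline{\mu'}$, is an isomorphism of complete $L$-lattices (it is known that this is equivalent to each of $R_1\mu=(\phi_{X',Y'})^\downarrow(\phi_{X',Y'})^\uparrow\mu_{X'}$, $R_2\mu=((\phi_{X,Y'})^\downarrow(\phi_{X,Y'})^\uparrow\mu)_{X'}$, $E_2\mu'=(\phi_{X,Y'})^\downarrow(\phi_{X,Y'})^\uparrow\underline{\mu'}$ being an isomorphism, and to: for every $\mu\in L^X$ there is $\mu'\in L^{X'}$ with $\phi^\uparrow\mu=(\phi_{X',Y})^\uparrow\mu'$, and for every $\lambda\in L^Y$ there is $\lambda'\in L^{Y'}$ with $\phi^\downarrow\lambda=(\phi_{X,Y'})^\downarrow\lambda'$).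 Reduct in RST: $(X',Y',\psi_{X',Y'})$ is a reduct of $(X,Y,\psi)$ in RST if the map $F_1\colon\mathcal{K}\psi_{X',Y'}\to\mathcal{K}\psi$, $\mu'\mapsto\psi^\forall\psi^\exists\underline{\mu'}$, is an isomorphism of complete $L$-lattices (equivalently, any one of $S_1\mu=(\psi_{X',Y'})^\forall(\psi_{X',Y'})^\exists\mu_{X'}$, $S_2\mu=((\psi_{X,Y'})^\forall(\psi_{X,Y'})^\exists\mu)_{X'}$, $F_2\mu'=(\psi_{X,Y'})^\forall(\psi_{X,Y'})^\exists\underline{\mu'}$ is an isomorphism). *)

theory Defs
  imports Main
begin

text \<open>A complete residuated lattice: the carrier is the complete lattice type 'l
  (bottom 0 = bot, top 1 = top), m is the multiplication, imp its residuum.\<close>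
definition complete_residuated_lattice ::
  "('l::complete_lattice \<Rightarrow> 'l \<Rightarrow> 'l) \<Rightarrow> ('l \<Rightarrow> 'l \<Rightarrow> 'l) \<Rightarrow> bool" where
  "complete_residuated_lattice m imp \<longleftrightarrow>
     (\<forall>a b. m a b = m b a) \<and>
     (\<forall>a b c. m (m a b) c = m a (m b c)) \<and>
     (\<forall>a. m a top = a) \<and>
     (\<forall>a B. m a (Sup B) = (SUP b\<in>B. m a b)) \<and>
     (\<forall>a b c. m a b \<le> c \<longleftrightarrow> a \<le> imp b c)"

definition neg :: "('l::complete_lattice \<Rightarrow> 'l \<Rightarrow> 'l) \<Rightarrow> 'l \<Rightarrow> 'l" where
  "neg imp a = imp a bot"

text \<open>Elements of L^X are represented by functions that are bot outside X.
  In particular, for X' \<subseteq> X, an element of L^X' is literally its extension by 0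
  to an element of L^X.\<close>
definition LFun :: "'x set \<Rightarrow> ('x \<Rightarrow> 'l::complete_lattice) set" where
  "LFun X = {\<mu>. \<forall>x. x \<notin> X \<longrightarrow> \<mu> x = bot}"

definition LOrd :: "('l::complete_lattice \<Rightarrow> 'l \<Rightarrow> 'l) \<Rightarrow> 'x set \<Rightarrow> ('x \<Rightarrow> 'l) \<Rightarrow> ('x \<Rightarrow> 'l) \<Rightarrow> 'l" where
  "LOrd imp X \<mu> \<mu>' = (INF x\<in>X. imp (\<mu> x) (\<mu>' x))"

definition up :: "('l::complete_lattice \<Rightarrow> 'l \<Rightarrow> 'l) \<Rightarrow> 'x set \<Rightarrow> 'y set \<Rightarrow> ('x \<Rightarrow> 'y \<Rightarrow> 'l)
    \<Rightarrow> ('x \<Rightarrow> 'l) \<Rightarrow> ('y \<Rightarrow> 'l)" where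
  "up imp X Y \<phi> \<mu> = (\<lambda>y. if y \<in> Y then (INF x\<in>X. imp (\<mu> x) (\<phi> x y)) else bot)"

definition down :: "('l::complete_lattice \<Rightarrow> 'l \<Rightarrow> 'l) \<Rightarrow> 'x set \<Rightarrow> 'y set \<Rightarrow> ('x \<Rightarrow> 'y \<Rightarrow> 'l)
    \<Rightarrow> ('y \<Rightarrow> 'l) \<Rightarrow> ('x \<Rightarrow> 'l)" where
  "down imp X Y \<phi> la = (\<lambda>x. if x \<in> X then (INF y\<in>Y. imp (la y) (\<phi> x y)) else bot)"

definition ex :: "('l::complete_lattice \<Rightarrow> 'l \<Rightarrow> 'l) \<Rightarrow> 'x set \<Rightarrow> 'y set \<Rightarrow> ('x \<Rightarrow> 'y \<Rightarrow> 'l)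
    \<Rightarrow> ('x \<Rightarrow> 'l) \<Rightarrow> ('y \<Rightarrow> 'l)" where
  "ex m X Y \<phi> \<mu> = (\<lambda>y. if y \<in> Y then (SUP x\<in>X. m (\<mu> x) (\<phi> x y)) else bot)"

definition all :: "('l::complete_lattice \<Rightarrow> 'l \<Rightarrow> 'l) \<Rightarrow> 'x set \<Rightarrow> 'y set \<Rightarrow> ('x \<Rightarrow> 'y \<Rightarrow> 'l)
    \<Rightarrow> ('y \<Rightarrow> 'l) \<Rightarrow> ('x \<Rightarrow> 'l)" where
  "all imp X Y \<phi> la = (\<lambda>x. if x \<in> X then (INF y\<in>Y. imp (\<phi> x y) (la y)) else bot)"

definition Mset :: "('l::complete_lattice \<Rightarrow> 'l \<Rightarrow> 'l) \<Rightarrow> 'x set \<Rightarrow> 'y set \<Rightarrow> ('x \<Rightarrow> 'y \<Rightarrow> 'l)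
    \<Rightarrow> ('x \<Rightarrow> 'l) set" where
  "Mset imp X Y \<phi> = {\<mu> \<in> LFun X. down imp X Y \<phi> (up imp X Y \<phi> \<mu>) = \<mu>}"

definition Kset :: "('l::complete_lattice \<Rightarrow> 'l \<Rightarrow> 'l) \<Rightarrow> ('l \<Rightarrow> 'l \<Rightarrow> 'l) \<Rightarrow> 'x set \<Rightarrow> 'y set
    \<Rightarrow> ('x \<Rightarrow> 'y \<Rightarrow> 'l) \<Rightarrow> ('x \<Rightarrow> 'l) set" where
  "Kset m imp X Y \<psi> = {\<mu> \<in> LFun X. all imp X Y \<psi> (ex m X Y \<psi> \<mu>) = \<mu>}"

definition L_iso :: "('l::complete_lattice \<Rightarrow> 'l \<Rightarrow> 'l) \<Rightarrow> 'x set \<Rightarrow> 'x set \<Rightarrow> ('x \<Rightarrow> 'l) set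
    \<Rightarrow> ('x \<Rightarrow> 'l) set \<Rightarrow> (('x \<Rightarrow> 'l) \<Rightarrow> ('x \<Rightarrow> 'l)) \<Rightarrow> bool" where
  "L_iso imp X' X A B f \<longleftrightarrow> bij_betw f A B \<and>
     (\<forall>p\<in>A. \<forall>p'\<in>A. LOrd imp X' p p' = LOrd imp X (f p) (f p'))"

text \<open>Reduct in FCA: E1 : M(phi_{X',Y'}) \<rightarrow> M(phi), mu' \<mapsto> phi^down phi^up (mu' extended by 0).\<close>
definition FCA_reduct :: "('l::complete_lattice \<Rightarrow> 'l \<Rightarrow> 'l) \<Rightarrow> 'x set \<Rightarrow> 'y set \<Rightarrow> ('x \<Rightarrow> 'y \<Rightarrow> 'l)
    \<Rightarrow> 'x set \<Rightarrow> 'y set \<Rightarrow> bool" where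
  "FCA_reduct imp X Y \<phi> X' Y' \<longleftrightarrow>
     L_iso imp X' X (Mset imp X' Y' \<phi>) (Mset imp X Y \<phi>) (\<lambda>\<mu>'. down imp X Y \<phi> (up imp X Y \<phi> \<mu>'))"

text \<open>Reduct in RST: F1 : K(psi_{X',Y'}) \<rightarrow> K(psi), mu' \<mapsto> psi^forall psi^exists (mu' extended by 0).\<close>
definition RST_reduct :: "('l::complete_lattice \<Rightarrow> 'l \<Rightarrow> 'l) \<Rightarrow> ('l \<Rightarrow> 'l \<Rightarrow> 'l) \<Rightarrow> 'x set \<Rightarrow> 'y set
    \<Rightarrow> ('x \<Rightarrow> 'y \<Rightarrow> 'l) \<Rightarrow> 'x set \<Rightarrow> 'y set \<Rightarrow> bool" where
  "RST_reduct m imp X Y \<psi> X' Y' \<longleftrightarrow>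
     L_iso imp X' X (Kset m imp X' Y' \<psi>) (Kset m imp X Y \<psi>) (\<lambda>\<mu>'. all imp X Y \<psi> (ex m X Y \<psi> \<mu>'))"

end

theory Submission
  imports Defs
begin

context
  fixes m imp :: "'l::complete_lattice \<Rightarrow> 'l \<Rightarrow> 'l"
  assumes crl: "complete_residuated_lattice m imp"
begin

lemma comm: "m a b = m b a" using crl unfolding complete_residuated_lattice_def by blast
lemma assoc: "m (m a b) c = m a (m b c)" using crl unfolding complete_residuated_lattice_def by blast
lemma unit: "m a top = a" using crl unfolding complete_residuated_lattice_def by blast
lemma dist: "m a (Sup B) = (SUP b\<in>B. m a b)" using crl unfolding complete_residuated_lattice_def by blast
lemma res: "m a b \<le> c \<longleftrightarrow> a \<le> imp b c" using crl unfolding complete_residuated_lattice_def by blast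

lemma eqI': "(\<And>z. z \<le> x \<longleftrightarrow> z \<le> y) \<Longrightarrow> x = (y::'l)"
  by (meson order.antisym order.refl)

lemma mono_m: "a \<le> b \<Longrightarrow> m c a \<le> m c b"
proof -
  assume "a \<le> b"
  then have "b = Sup {a,b}" by (simp add: sup_absorb2)
  then have "m c b = sup (m c a) (m c b)" using dist[of c "{a,b}"] by simp
  then show ?thesis by (metis sup.cobounded1)
qed

lemma m_bot: "m a bot = bot" using dist[of a "{}"] by simp
lemma m_bot2: "m bot a = bot" using m_bot comm by metis
lemma imp_top: "imp top b = b"
  by (rule eqI') (metis res unit)
lemma imp_refl: "imp b b = top"
  by (metis comm res top_unique unit order.refl)
lemma imp_bot: "imp bot b = top"
proof -
  have "m top bot \<le> b" by (simp add: m_bot)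
  then have "top \<le> imp bot b" using res by blast
  then show ?thesis by (simp add: top_unique)
qed
lemma imp_Sup: "imp (Sup B) c = (INF b\<in>B. imp b c)"
proof (rule eqI')
  fix z
  have "z \<le> imp (Sup B) c \<longleftrightarrow> (SUP b\<in>B. m z b) \<le> c" using res dist by metis
  also have "\<dots> \<longleftrightarrow> (\<forall>b\<in>B. m z b \<le> c)" by (simp add: SUP_le_iff)
  also have "\<dots> \<longleftrightarrow> (\<forall>b\<in>B. z \<le> imp b c)" using res by blast
  also have "\<dots> \<longleftrightarrow> z \<le> (INF b\<in>B. imp b c)" by (simp add: le_INF_iff)
  finally show "z \<le> imp (Sup B) c \<longleftrightarrow> z \<le> (INF b\<in>B. imp b c)" .
qed
lemma imp_m: "imp (m a b) c = imp a (imp b c)"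
  by (rule eqI') (metis res assoc comm)
lemma neg_m: "neg imp (m a b) = imp a (neg imp b)"
  unfolding neg_def by (rule imp_m)
lemma neg_Sup: "neg imp (Sup B) = (INF b\<in>B. neg imp b)"
  unfolding neg_def by (rule imp_Sup)
lemma mp: "m (imp b c) b \<le> c" using res by blast
lemma contra: "imp b c \<le> imp (neg imp c) (neg imp b)"
proof -
  have "m (m (imp b c) (neg imp c)) b \<le> bot"
  proof -
    have "m (m (imp b c) (neg imp c)) b = m (m (imp b c) b) (neg imp c)" by (metis assoc comm)
    also have "\<dots> \<le> m c (neg imp c)" by (metis comm mono_m mp)
    also have "\<dots> \<le> bot" by (metis comm mp neg_def)
    finally show ?thesis .
  qed
  then show ?thesis by (simp add: neg_def res)
qed
lemma dn_le: "a \<le> neg imp (neg imp a)"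
  unfolding neg_def by (metis comm mp res)
lemma neg_anti: "b \<le> c \<Longrightarrow> neg imp c \<le> neg imp b"
proof -
  assume "b \<le> c"
  then have "m (neg imp c) b \<le> m (neg imp c) c" by (rule mono_m)
  also have "\<dots> \<le> bot" unfolding neg_def using comm mp by metis
  finally show ?thesis unfolding neg_def using res by blast
qed
lemma tn: "neg imp (neg imp (neg imp a)) = neg imp a"
  by (rule order.antisym[OF neg_anti[OF dn_le] dn_le])
lemma contra_eq: "(\<forall>a. neg imp (neg imp a) = a) \<Longrightarrow> imp (neg imp c) (neg imp b) = imp b c"
  by (metis contra order.antisym)
lemma pre: "imp b c \<le> imp (imp e b) (imp e c)"
proof -
  have "m (m (imp b c) (imp e b)) e \<le> c"
  proof -
    have "m (m (imp b c) (imp e b)) e = m (imp b c) (m (imp e b) e)" by (rule assoc)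
    also have "\<dots> \<le> m (imp b c) b" by (rule mono_m[OF mp])
    also have "\<dots> \<le> c" by (rule mp)
    finally show ?thesis .
  qed
  then show ?thesis by (simp add: res)
qed

lemma closure_eq:
  assumes dn: "\<forall>a. neg imp (neg imp a) = a"
  shows "all imp X Y (\<lambda>x y. neg imp (\<phi> x y)) (ex m X Y (\<lambda>x y. neg imp (\<phi> x y)) \<mu>)
         = down imp X Y \<phi> (up imp X Y \<phi> \<mu>)"
proof (rule ext)
  fix x
  show "all imp X Y (\<lambda>x y. neg imp (\<phi> x y)) (ex m X Y (\<lambda>x y. neg imp (\<phi> x y)) \<mu>) x
         = down imp X Y \<phi> (up imp X Y \<phi> \<mu>) x"
  proof (cases "x \<in> X")
    case False then show ?thesis by (simp add: all_def down_def)
  next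
    case True
    have "\<And>y. y \<in> Y \<Longrightarrow> imp (neg imp (\<phi> x y)) (SUP x'\<in>X. m (\<mu> x') (neg imp (\<phi> x' y)))
       = imp (INF x'\<in>X. imp (\<mu> x') (\<phi> x' y)) (\<phi> x y)"
    proof -
      fix y
      let ?S = "SUP x'\<in>X. m (\<mu> x') (neg imp (\<phi> x' y))"
      have ns: "neg imp ?S = (INF x'\<in>X. imp (\<mu> x') (\<phi> x' y))"
        using neg_Sup[of "(\<lambda>x'. m (\<mu> x') (neg imp (\<phi> x' y))) ` X"]
        by (simp add: image_comp neg_m dn)
      have "imp (neg imp (\<phi> x y)) ?S = imp (neg imp ?S) (neg imp (neg imp (\<phi> x y)))"
        using contra_eq[OF dn] by simp
      also have "\<dots> = imp (INF x'\<in>X. imp (\<mu> x') (\<phi> x' y)) (\<phi> x y)" using ns dn by simp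
      finally show "imp (neg imp (\<phi> x y)) ?S = imp (INF x'\<in>X. imp (\<mu> x') (\<phi> x' y)) (\<phi> x y)" .
    qed
    then show ?thesis using True by (simp add: all_def down_def ex_def up_def cong: INF_cong)
  qed
qed

lemma reduct_eq:
  assumes dn: "\<forall>a. neg imp (neg imp a) = a"
  shows "RST_reduct m imp X Y (\<lambda>x y. neg imp (\<phi> x y)) X' Y' = FCA_reduct imp X Y \<phi> X' Y'"
proof -
  have K: "\<And>A B. Kset m imp A B (\<lambda>x y. neg imp (\<phi> x y)) = Mset imp A B \<phi>"
    unfolding Kset_def Mset_def by (simp only: closure_eq[OF dn])
  have F: "(\<lambda>\<mu>'. all imp X Y (\<lambda>x y. neg imp (\<phi> x y)) (ex m X Y (\<lambda>x y. neg imp (\<phi> x y)) \<mu>'))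
      = (\<lambda>\<mu>'. down imp X Y \<phi> (up imp X Y \<phi> \<mu>'))"
    by (simp only: closure_eq[OF dn])
  show ?thesis unfolding RST_reduct_def FCA_reduct_def K F ..
qed

lemma counter:
  assumes na: "neg imp (neg imp a) \<noteq> a"
  shows "RST_reduct m imp {0,1::nat} {0::nat} (\<lambda>x y. neg imp (if x = 0 then bot else a)) {0} {0}
       \<and> \<not> FCA_reduct imp {0,1::nat} {0::nat} (\<lambda>x y. if x = 0 then bot else a) {0} {0}"
proof
  define \<psi> where "\<psi> = (\<lambda>(x::nat) (y::nat). neg imp (if x = 0 then bot else a))"
  define na where "na = neg imp a"
  have ntop: "neg imp bot = top" unfolding neg_def by (rule imp_refl)
  define H where "H = (\<lambda>l (x::nat). if x = 0 then l else if x = 1 then imp na l else bot)"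
  define F where "F = (\<lambda>\<mu>'. all imp {0,1::nat} {0::nat} \<psi> (ex m {0,1} {0} \<psi> \<mu>'))"
  have Fform: "F \<mu> = H (sup (\<mu> 0) (m (\<mu> 1) na))" for \<mu>
    by (rule ext) (simp add: F_def H_def all_def ex_def \<psi>_def ntop unit imp_top na_def)
  have HF: "sup l (m (imp na l) na) = l" for l
    by (simp add: local.mp sup_absorb1)
  have K1: "Kset m imp {0::nat} {0::nat} \<psi> = LFun {0}"
  proof -
    have "all imp {0::nat} {0::nat} \<psi> (ex m {0} {0} \<psi> \<mu>) = \<mu>" if "\<mu> \<in> LFun {0}" for \<mu>
      using that by (auto simp: all_def ex_def \<psi>_def ntop unit imp_top LFun_def)
    then show ?thesis unfolding Kset_def by auto
  qed
  have K2: "Kset m imp {0,1::nat} {0::nat} \<psi> = range H"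
  proof
    show "Kset m imp {0,1::nat} {0::nat} \<psi> \<subseteq> range H"
    proof
      fix \<mu> assume "\<mu> \<in> Kset m imp {0,1::nat} {0::nat} \<psi>"
      then have "F \<mu> = \<mu>" unfolding Kset_def F_def by auto
      then have "\<mu> = H (sup (\<mu> 0) (m (\<mu> 1) na))" using Fform by simp
      then show "\<mu> \<in> range H" by (rule range_eqI)
    qed
  next
    show "range H \<subseteq> Kset m imp {0,1::nat} {0::nat} \<psi>"
    proof
      fix \<mu> assume "\<mu> \<in> range H"
      then obtain l where l: "\<mu> = H l" by blast
      have "F (H l) = H l" unfolding Fform by (simp add: H_def HF)
      moreover have "H l \<in> LFun {0,1}" by (simp add: H_def LFun_def)
      ultimately show "\<mu> \<in> Kset m imp {0,1::nat} {0::nat} \<psi>" unfolding Kset_def F_def l by auto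
    qed
  qed
  have FL: "\<mu> \<in> LFun {0} \<Longrightarrow> F \<mu> = H (\<mu> 0)" for \<mu>
    unfolding Fform by (simp add: LFun_def m_bot2)
  have bij: "bij_betw F (LFun {0}) (range H)"
  proof (rule bij_betw_imageI)
    show "inj_on F (LFun {0})"
    proof (rule inj_onI)
      fix p q assume p: "p \<in> LFun {0}" and q: "q \<in> LFun {0}" and e: "F p = F q"
      then have "H (p 0) 0 = H (q 0) 0" using FL by metis
      then have "p 0 = q 0" by (simp add: H_def)
      show "p = q"
      proof (rule ext)
        fix x show "p x = q x" using p q \<open>p 0 = q 0\<close> unfolding LFun_def by (cases "x = 0") auto
      qed
    qed
    show "F ` LFun {0} = range H"
    proof
      show "F ` LFun {0} \<subseteq> range H" using FL by auto
      show "range H \<subseteq> F ` LFun {0}"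
      proof
        fix \<mu> assume "\<mu> \<in> range H"
        then obtain l where l: "\<mu> = H l" by blast
        let ?p = "\<lambda>x::nat. if x = 0 then l else bot"
        have "?p \<in> LFun {0}" by (simp add: LFun_def)
        moreover have "F ?p = H l" using FL[OF \<open>?p \<in> LFun {0}\<close>] by simp
        ultimately show "\<mu> \<in> F ` LFun {0}" using l by (intro image_eqI[where x="?p"]) simp_all
      qed
    qed
  qed
  have iso: "LOrd imp {0} p p' = LOrd imp {0,1} (F p) (F p')" if "p \<in> LFun {0}" "p' \<in> LFun {0}" for p p'
    using that by (simp add: FL LOrd_def H_def inf_absorb1 pre)
  show "RST_reduct m imp {0,1::nat} {0::nat} (\<lambda>x y. neg imp (if x = 0 then bot else a)) {0} {0}"
    unfolding RST_reduct_def L_iso_def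
    using K1 K2 bij iso unfolding F_def \<psi>_def by simp
next
  define \<phi> where "\<phi> = (\<lambda>(x::nat) (y::nat). if x = 0 then bot else a)"
  define \<nu> where "\<nu> = (\<lambda>x::nat. if x = 0 then neg imp a else if x = 1 then top else bot)"
  have up2: "up imp {0,1::nat} {0::nat} \<phi> \<mu> 0 = inf (neg imp (\<mu> 0)) (imp (\<mu> 1) a)" for \<mu>
    by (simp add: up_def \<phi>_def neg_def)
  have down2: "down imp {0,1::nat} {0::nat} \<phi> la = (\<lambda>x. if x = 0 then neg imp (la 0) else if x = 1 then imp (la 0) a else bot)" for la
    by (rule ext) (simp add: down_def \<phi>_def neg_def)
  have u: "up imp {0,1::nat} {0::nat} \<phi> \<nu> 0 = a"
    unfolding up2 by (simp add: \<nu>_def imp_top dn_le inf_absorb2)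
  have "down imp {0,1::nat} {0::nat} \<phi> (up imp {0,1::nat} {0::nat} \<phi> \<nu>) = \<nu>"
    unfolding down2 u by (rule ext) (simp add: \<nu>_def imp_refl)
  then have "\<nu> \<in> Mset imp {0,1} {0} \<phi>"
    unfolding Mset_def by (simp add: \<nu>_def LFun_def)
  show "\<not> FCA_reduct imp {0,1::nat} {0::nat} (\<lambda>x y. if x = 0 then bot else a) {0} {0}"
  proof
    assume "FCA_reduct imp {0,1::nat} {0::nat} (\<lambda>x y. if x = 0 then bot else a) {0} {0}"
    then have "bij_betw (\<lambda>\<mu>'. down imp {0,1} {0} \<phi> (up imp {0,1} {0} \<phi> \<mu>')) (Mset imp {0} {0} \<phi>) (Mset imp {0,1} {0} \<phi>)"
      unfolding FCA_reduct_def L_iso_def \<phi>_def by simp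
    then have "(\<lambda>\<mu>'. down imp {0,1} {0} \<phi> (up imp {0,1} {0} \<phi> \<mu>')) ` (Mset imp {0} {0} \<phi>) = Mset imp {0,1} {0} \<phi>"
      by (rule bij_betw_imp_surj_on)
    then have "\<nu> \<in> (\<lambda>\<mu>'. down imp {0,1} {0} \<phi> (up imp {0,1} {0} \<phi> \<mu>')) ` (Mset imp {0} {0} \<phi>)"
      using \<open>\<nu> \<in> Mset imp {0,1} {0} \<phi>\<close> by simp
    then obtain p where p: "p \<in> Mset imp {0} {0} \<phi>" and e': "\<nu> = down imp {0,1} {0} \<phi> (up imp {0,1} {0} \<phi> p)"
      by (rule imageE)
    note e = e'[symmetric]
    have p1: "p 1 = bot" using p unfolding Mset_def LFun_def by auto
    let ?t = "neg imp (p 0)"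
    have t: "up imp {0,1::nat} {0::nat} \<phi> p 0 = ?t"
      unfolding up2 p1 by (simp add: neg_def imp_bot)
    have e2: "(\<lambda>x. if x = 0 then neg imp ?t else if x = 1 then imp ?t a else bot) = \<nu>"
      using e unfolding down2 t .
    have e0: "neg imp ?t = neg imp a" using fun_cong[OF e2, of 0] by (simp add: \<nu>_def)
    have e1: "imp ?t a = top" using fun_cong[OF e2, of 1] by (simp add: \<nu>_def)
    have "?t = neg imp (neg imp ?t)" by (rule tn[symmetric])
    also have "\<dots> = neg imp (neg imp a)" using e0 by simp
    finally have "?t = neg imp (neg imp a)" .
    moreover have "?t \<le> a"
    proof -
      have "top \<le> imp ?t a" using e1 by simp
      then have "m top ?t \<le> a" using res by blast
      then show ?thesis by (simp add: comm[of top] unit)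
    qed
    ultimately have "neg imp (neg imp a) \<le> a" by simp
    then show False using dn_le[of a] na by (simp add: order.antisym)
  qed
qed
end


lemma aux: "(\<forall>X Y p X' Y'. A X Y p X' Y' \<longrightarrow> B X Y p X' Y' \<longrightarrow> (R X Y p X' Y' \<longleftrightarrow> F X Y p X' Y'))
   \<longrightarrow> (\<forall>X Y p X' Y'. A X Y p X' Y' \<longrightarrow> B X Y p X' Y' \<longrightarrow> R X Y p X' Y' \<longrightarrow> F X Y p X' Y')"
  by blast

theorem mainTheorem8:
  fixes m imp :: "'l::complete_lattice \<Rightarrow> 'l \<Rightarrow> 'l"
  assumes "complete_residuated_lattice m imp"
  shows
    "((\<forall>a. neg imp (neg imp a) = a) \<longrightarrow>
        (\<forall>(X::'x set) (Y::'y set) (\<phi>::'x \<Rightarrow> 'y \<Rightarrow> 'l) X' Y'. X' \<subseteq> X \<longrightarrow> Y' \<subseteq> Y \<longrightarrow>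
           (RST_reduct m imp X Y (\<lambda>x y. neg imp (\<phi> x y)) X' Y' \<longleftrightarrow> FCA_reduct imp X Y \<phi> X' Y')))
   \<and> ((\<forall>(X::'x set) (Y::'y set) (\<phi>::'x \<Rightarrow> 'y \<Rightarrow> 'l) X' Y'. X' \<subseteq> X \<longrightarrow> Y' \<subseteq> Y \<longrightarrow>
           (RST_reduct m imp X Y (\<lambda>x y. neg imp (\<phi> x y)) X' Y' \<longleftrightarrow> FCA_reduct imp X Y \<phi> X' Y'))
       \<longrightarrow> (\<forall>(X::'x set) (Y::'y set) (\<phi>::'x \<Rightarrow> 'y \<Rightarrow> 'l) X' Y'. X' \<subseteq> X \<longrightarrow> Y' \<subseteq> Y \<longrightarrow>
           RST_reduct m imp X Y (\<lambda>x y. neg imp (\<phi> x y)) X' Y' \<longrightarrow> FCA_reduct imp X Y \<phi> X' Y'))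
   \<and> ((\<forall>(X::nat set) (Y::nat set) (\<phi>::nat \<Rightarrow> nat \<Rightarrow> 'l) X' Y'. X' \<subseteq> X \<longrightarrow> Y' \<subseteq> Y \<longrightarrow>
           RST_reduct m imp X Y (\<lambda>x y. neg imp (\<phi> x y)) X' Y' \<longrightarrow> FCA_reduct imp X Y \<phi> X' Y')
       \<longrightarrow> (\<forall>a. neg imp (neg imp a) = a))"
  proof -
  note crl = assms
  have P1: "(\<forall>a. neg imp (neg imp a) = a) \<longrightarrow>
        (\<forall>(X::'x set) (Y::'y set) (\<phi>::'x \<Rightarrow> 'y \<Rightarrow> 'l) X' Y'. X' \<subseteq> X \<longrightarrow> Y' \<subseteq> Y \<longrightarrow>
           (RST_reduct m imp X Y (\<lambda>x y. neg imp (\<phi> x y)) X' Y' \<longleftrightarrow> FCA_reduct imp X Y \<phi> X' Y'))"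
    by (intro impI allI) (rule reduct_eq[OF crl])
  have P3: "(\<forall>(X::nat set) (Y::nat set) (\<phi>::nat \<Rightarrow> nat \<Rightarrow> 'l) X' Y'. X' \<subseteq> X \<longrightarrow> Y' \<subseteq> Y \<longrightarrow>
           RST_reduct m imp X Y (\<lambda>x y. neg imp (\<phi> x y)) X' Y' \<longrightarrow> FCA_reduct imp X Y \<phi> X' Y')
       \<longrightarrow> (\<forall>a. neg imp (neg imp a) = a)"
  proof (intro impI allI)
    fix a
    assume H: "\<forall>(X::nat set) (Y::nat set) (\<phi>::nat \<Rightarrow> nat \<Rightarrow> 'l) X' Y'. X' \<subseteq> X \<longrightarrow> Y' \<subseteq> Y \<longrightarrow>
           RST_reduct m imp X Y (\<lambda>x y. neg imp (\<phi> x y)) X' Y' \<longrightarrow> FCA_reduct imp X Y \<phi> X' Y'"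
    show "neg imp (neg imp a) = a"
    proof (rule ccontr)
      assume "neg imp (neg imp a) \<noteq> a"
      then have c: "RST_reduct m imp {0,1::nat} {0::nat} (\<lambda>x y. neg imp (if x = 0 then bot else a)) {0} {0}
       \<and> \<not> FCA_reduct imp {0,1::nat} {0::nat} (\<lambda>x y. if x = 0 then bot else a) {0} {0}"
        by (rule counter[OF crl])
      have "FCA_reduct imp {0,1::nat} {0::nat} (\<lambda>x y. if x = 0 then bot else a) {0} {0}"
      proof (rule H[rule_format])
        show "{0::nat} \<subseteq> {0,1}" by simp
        show "{0::nat} \<subseteq> {0}" by simp
        show "RST_reduct m imp {0,1::nat} {0::nat} (\<lambda>x y. neg imp (if x = 0 then bot else a)) {0} {0}"
          using c by (rule conjunct1)
      qed
      moreover have "\<not> FCA_reduct imp {0,1::nat} {0::nat} (\<lambda>x y. if x = 0 then bot else a) {0} {0}"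
        using c by (rule conjunct2)
      ultimately show False by (rule notE[rotated])
    qed
  qed
  have P2: "(\<forall>(X::'x set) (Y::'y set) (\<phi>::'x \<Rightarrow> 'y \<Rightarrow> 'l) X' Y'. X' \<subseteq> X \<longrightarrow> Y' \<subseteq> Y \<longrightarrow>
           (RST_reduct m imp X Y (\<lambda>x y. neg imp (\<phi> x y)) X' Y' \<longleftrightarrow> FCA_reduct imp X Y \<phi> X' Y'))
       \<longrightarrow> (\<forall>(X::'x set) (Y::'y set) (\<phi>::'x \<Rightarrow> 'y \<Rightarrow> 'l) X' Y'. X' \<subseteq> X \<longrightarrow> Y' \<subseteq> Y \<longrightarrow>
           RST_reduct m imp X Y (\<lambda>x y. neg imp (\<phi> x y)) X' Y' \<longrightarrow> FCA_reduct imp X Y \<phi> X' Y')"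
    by (rule aux)
  show ?thesis using P1 P2 P3 by (intro conjI)
qed

end
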